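(* Let $q\in(0,1)$, let $\alpha,p,j\ge0$ be integers and $0\le t\le p$. Then $$\sum_{M\in M^{(\alpha)}_{p,j}(t)}q^{\mathrm{cr}(M)}=\sum_{l=0}^{t}\sum_{i=0}^{l}q^{\,i(l-i)+(t-i)(j-i+\alpha)+(j-l+i)(t-l+i)}\frac{[t-l+i]_q!\,[t-i]_q!}{[t-l]_q!}\begin{bmatrix} p\\ t-i\end{bmatrix}_q\begin{bmatrix} p\\ t-l+i\end{bmatrix}_q\begin{bmatrix} \alpha+j\\ i\end{bmatrix}_q\begin{bmatrix} j\\ l-i\end{bmatrix}_q.$$
   Context: $[n]_q=\frac{1-q^n}{1-q}$, $[n]_q!=\prod_{m=1}^n[m]_q$, $\begin{bmatrix} n\\ m\end{bmatrix}_q=\frac{[n]_q!}{[m]_q![n-m]_q!}$ for $0\le m\le n$ and $=0$ if $m>n$ or $m<0$. Bipartite matchings: for integers $n,j,\alpha\ge0$, let $T_-=\{-\alpha-j,\dots,-1\}$, $T_+=\{1,\dots,n\}$ (top row), $B_-=\{-\tilde j,\dots,-\tilde 1\}$, $B_+=\{\tilde1,\dots,\tilde n\}$ (bottom row; $\tilde m$ is a formal copy of the integer $m$, bottom vertices compared via these integers). A bipartite matching is a set partition of $T_-\cup T_+\cup B_-\cup B_+$ into singletons (isolated vertices) and blocks $\{a,\tilde b\}$ with $a$ top, $\tilde b$ bottom (edges, written $(a,\tilde b)$). $M^{(\alpha)}_{n,j}$ is the set of such matchings with no edge between $T_-$ and $B_-$; $M^{(\alpha)}_{n,j}(l)$ its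 subset with exactly $l$ edges. The crossing number $\mathrm{cr}(M)$ is the total number of: (C1) unordered pairs of edges $(a,\tilde b),(c,\tilde d)$ with $a<c$ and $d<b$; (C2) pairs of an edge $(a,\tilde b)$ and an isolated top vertex $c$ with $c<a$; (C3) pairs of an edge $(a,\tilde b)$ and an isolated bottom vertex $\tilde d$ with $d<b$. *)

theory Defs
  imports Complex_Main
begin

definition qint :: "real \<Rightarrow> nat \<Rightarrow> real" where
  "qint q n = (1 - q ^ n) / (1 - q)"

definition qfact :: "real \<Rightarrow> nat \<Rightarrow> real" where
  "qfact q n = (\<Prod>m = 1..n. qint q m)"

definition qbinom :: "real \<Rightarrow> int \<Rightarrow> int \<Rightarrow> real" where
  "qbinom q n m = (if 0 \<le> m \<and> m \<le> n
      then qfact q (nat n) / (qfact q (nat m) * qfact q (nat (n - m))) else 0)"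

text \<open>Top row: T_- = {-alpha-j..-1}, T_+ = {1..n}; bottom row B_- = {-j..-1}, B_+ = {1..n}.
  Vertices are represented by integers (bottom copies are the same integers in a separate set).\<close>
definition top_row :: "nat \<Rightarrow> nat \<Rightarrow> nat \<Rightarrow> int set" where
  "top_row \<alpha> n j = {-(int \<alpha> + int j)..-1} \<union> {1..int n}"

definition bot_row :: "nat \<Rightarrow> nat \<Rightarrow> int set" where
  "bot_row n j = {-(int j)..-1} \<union> {1..int n}"

text \<open>A bipartite matching is determined by its set of edges (a, b~): a partial bijection
  between top and bottom vertices; all other vertices are singletons.
  No edge joins T_- and B_-.\<close>
definition matchings :: "nat \<Rightarrow> nat \<Rightarrow> nat \<Rightarrow> (int \<times> int) set set" where
  "matchings \<alpha> n j = {E. E \<subseteq> top_row \<alpha> n j \<times> bot_row n j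
      \<and> (\<forall>(a,b)\<in>E. \<forall>(c,d)\<in>E. (a = c \<longleftrightarrow> b = d))
      \<and> (\<forall>(a,b)\<in>E. \<not> (a < 0 \<and> b < 0))}"

definition matchings_l :: "nat \<Rightarrow> nat \<Rightarrow> nat \<Rightarrow> nat \<Rightarrow> (int \<times> int) set set" where
  "matchings_l \<alpha> n j l = {E \<in> matchings \<alpha> n j. card E = l}"

definition cr :: "nat \<Rightarrow> nat \<Rightarrow> nat \<Rightarrow> (int \<times> int) set \<Rightarrow> nat" where
  "cr \<alpha> n j E =
     card {((a,b),(c,d)). (a,b) \<in> E \<and> (c,d) \<in> E \<and> a < c \<and> d < b}
   + card {((a,b),c). (a,b) \<in> E \<and> c \<in> top_row \<alpha> n j - fst ` E \<and> c < a}
   + card {((a,b),d). (a,b) \<in> E \<and> d \<in> bot_row n j - snd ` E \<and> d < b}"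

end

theory Submission
  imports Defs
begin

definition qbn :: "real \<Rightarrow> nat \<Rightarrow> nat \<Rightarrow> real" where
  "qbn q n k = (if k \<le> n then qfact q n / (qfact q k * qfact q (n - k)) else 0)"

definition ffq :: "real \<Rightarrow> nat \<Rightarrow> nat \<Rightarrow> real" where
  "ffq q n k = qbn q n k * qfact q k"

lemma qfact_0[simp]: "qfact q 0 = 1" by (simp add: qfact_def)
lemma qfact_Suc: "qfact q (Suc n) = qfact q n * qint q (Suc n)"
  by (simp add: qfact_def prod.nat_ivl_Suc')
lemma qint_0[simp]: "qint q 0 = 0" by (simp add: qint_def)
lemma qbn_gt[simp]: "n < k \<Longrightarrow> qbn q n k = 0" by (simp add: qbn_def)

context
  fixes q :: real
  assumes q0: "0 < q" and q1: "q < 1"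
begin

lemma qint_pos: "qint q (Suc n) > 0"
proof -
  have "q ^ Suc n < 1" using q0 q1 by (rule power_Suc_less_one)
  then show ?thesis using q1 by (simp add: qint_def)
qed

lemma qfact_pos: "qfact q n > 0"
  by (induction n) (auto simp: qfact_Suc qint_pos)

lemma qint_split: assumes "k \<le> n"
  shows "qint q (Suc n) = qint q (Suc k) + q ^ Suc k * qint q (n - k)"
proof -
  have "Suc k + (n - k) = Suc n" using assms by simp
  then have "q ^ Suc n = q ^ Suc k * q ^ (n - k)"
    by (metis power_add)
  moreover have "k + (n - k) = n" using assms by simp
  then have "q ^ n = q ^ k * q ^ (n - k)"
    by (metis power_add)
  ultimately show ?thesis using q1 by (simp add: qint_def field_simps)
qed

lemma qbn_0[simp]: "qbn q n 0 = 1" using qfact_pos[of n] by (simp add: qbn_def)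
lemma qbn_0_Suc[simp]: "qbn q 0 (Suc k) = 0" by (simp add: qbn_def)

lemma qbn_pascal:
  "qbn q (Suc n) (Suc k) = qbn q n k + q ^ Suc k * qbn q n (Suc k)"
proof (cases "k < n")
  case True
  then obtain d where n: "n = k + Suc d" by (metis add_Suc_right less_imp_Suc_add)
  have p: "qfact q m > 0" for m using qfact_pos .
  have pi: "qint q (Suc m) > 0" for m using qint_pos .
  have sp: "qint q (Suc n) = qint q (Suc k) + q ^ Suc k * qint q (Suc d)"
    using qint_split[of k n] n by simp
  have e1: "Suc n - Suc k = Suc d" "n - k = Suc d" "n - Suc k = d" using n by auto
  show ?thesis
    unfolding qbn_def using True
    apply (simp add: e1 qfact_Suc)
    using p[of n] p[of k] p[of d] pi[of k] pi[of d] sp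
    apply (simp add: field_simps)
    done
next
  case False
  have "qfact q m > 0" for m using qfact_pos .
  then show ?thesis using False qint_pos[of n]
    by (cases "k = n") (auto simp: qbn_def qfact_Suc)
qed

lemma ffq_0[simp]: "ffq q n 0 = 1" by (simp add: ffq_def)
lemma ffq_0_Suc[simp]: "ffq q 0 (Suc k) = 0" by (simp add: ffq_def)
lemma ffq_Suc:
  shows "ffq q (Suc n) (Suc k) = qint q (Suc n) * ffq q n k"
proof (cases "k \<le> n")
  case True
  have p: "qfact q m > 0" for m using qfact_pos .
  have e: "Suc n - Suc k = n - k" by simp
  show ?thesis using True unfolding ffq_def qbn_def
    using p[of n] p[of k] p[of "n-k"] qint_pos[of k] qint_pos[of n]
    by (simp add: e qfact_Suc field_simps)
qed (simp add: ffq_def qbn_def)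

end

context
  fixes q :: real
  assumes q0: "0 < q" and q1: "q < 1"
begin

lemma vand_term:
  assumes "k \<le> m"
  shows "q ^ ((j - k) * (m - k)) * q ^ Suc k * qbn q j (Suc k)
       = q ^ Suc m * (q ^ ((j - Suc k) * (m - k)) * qbn q j (Suc k))"
proof (cases "Suc k \<le> j")
  case True
  then obtain a where a: "j = Suc k + a" by (metis le_add_diff_inverse)
  obtain b where b: "m = k + b" using assms by (metis le_add_diff_inverse)
  have e: "(j - k) * (m - k) + Suc k = Suc m + (j - Suc k) * (m - k)"
    using a b by (simp add: algebra_simps)
  have "q ^ ((j - k) * (m - k)) * q ^ Suc k = q ^ Suc m * q ^ ((j - Suc k) * (m - k))"
    by (simp only: power_add[symmetric] e)
  then show ?thesis by (metis mult.assoc)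
next
  case False
  then show ?thesis by simp
qed

lemma qvand: "qbn q (j + N) m = (\<Sum>k=0..m. q ^ ((j - k) * (m - k)) * qbn q j k * qbn q N (m - k))"
proof (induction j arbitrary: m)
  case 0
  show ?case
  proof (cases m)
    case 0 then show ?thesis by (simp add: qbn_0[OF q0 q1])
  next
    case (Suc m')
    then show ?thesis
      by (simp add: sum.atLeast0_atMost_Suc_shift qbn_0[OF q0 q1] qbn_0_Suc[OF q0 q1] del: sum.cl_ivl_Suc)
  qed
next
  case (Suc j)
  show ?case
  proof (cases m)
    case 0 then show ?thesis by (simp add: qbn_0[OF q0 q1])
  next
    case (Suc m)
    note mm = this
    have L: "qbn q (Suc j + N) (Suc m) = qbn q (j + N) m + q ^ Suc m * qbn q (j + N) (Suc m)"
      using qbn_pascal[OF q0 q1, of "j + N" m] by simp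
    have R: "(\<Sum>k=0..Suc m. q ^ ((Suc j - k) * (Suc m - k)) * qbn q (Suc j) k * qbn q N (Suc m - k))
      = q ^ (Suc j * Suc m) * qbn q N (Suc m)
        + ((\<Sum>k=0..m. q ^ ((j - k) * (m - k)) * qbn q j k * qbn q N (m - k))
         + (\<Sum>k=0..m. q ^ ((j - k) * (m - k)) * q ^ Suc k * qbn q j (Suc k) * qbn q N (m - k)))"
    proof -
      have "(\<Sum>k=0..Suc m. q ^ ((Suc j - k) * (Suc m - k)) * qbn q (Suc j) k * qbn q N (Suc m - k))
        = q ^ (Suc j * Suc m) * qbn q N (Suc m)
          + (\<Sum>k=0..m. q ^ ((j - k) * (m - k)) * qbn q (Suc j) (Suc k) * qbn q N (m - k))"
        by (simp add: sum.atLeast0_atMost_Suc_shift qbn_0[OF q0 q1] del: sum.cl_ivl_Suc)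
      also have "(\<Sum>k=0..m. q ^ ((j - k) * (m - k)) * qbn q (Suc j) (Suc k) * qbn q N (m - k))
        = (\<Sum>k=0..m. q ^ ((j - k) * (m - k)) * qbn q j k * qbn q N (m - k)
           + q ^ ((j - k) * (m - k)) * q ^ Suc k * qbn q j (Suc k) * qbn q N (m - k))"
        by (rule sum.cong) (simp_all add: qbn_pascal[OF q0 q1] distrib_left distrib_right mult.assoc)
      finally show ?thesis by (simp add: sum.distrib)
    qed
    have IH2: "qbn q (j + N) (Suc m) = q ^ (j * Suc m) * qbn q N (Suc m)
        + (\<Sum>k=0..m. q ^ ((j - Suc k) * (m - k)) * qbn q j (Suc k) * qbn q N (m - k))"
      using Suc.IH[of "Suc m"]
      by (simp add: sum.atLeast0_atMost_Suc_shift qbn_0[OF q0 q1] del: sum.cl_ivl_Suc)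
    have T: "(\<Sum>k=0..m. q ^ ((j - k) * (m - k)) * q ^ Suc k * qbn q j (Suc k) * qbn q N (m - k))
       = q ^ Suc m * (\<Sum>k=0..m. q ^ ((j - Suc k) * (m - k)) * qbn q j (Suc k) * qbn q N (m - k))"
      unfolding sum_distrib_left
    proof (rule sum.cong)
      fix k assume "k \<in> {0..m}"
      then have "k \<le> m" by simp
      from vand_term[OF this, of j]
      show "q ^ ((j - k) * (m - k)) * q ^ Suc k * qbn q j (Suc k) * qbn q N (m - k)
        = q ^ Suc m * (q ^ ((j - Suc k) * (m - k)) * qbn q j (Suc k) * qbn q N (m - k))"
        by (metis mult.assoc)
    qed simp
    have "Suc j * Suc m = Suc m + j * Suc m" by simp
    then have P: "q ^ (Suc j * Suc m) = q ^ Suc m * q ^ (j * Suc m)"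
      by (metis power_add)
    show ?thesis unfolding mm L R Suc.IH[of m, symmetric] IH2 T P
      by (simp add: algebra_simps)
  qed
qed

end

definition matchg :: "int set \<Rightarrow> int set \<Rightarrow> (int \<times> int) set set" where
  "matchg S B = {E. E \<subseteq> S \<times> B
      \<and> (\<forall>(a,b)\<in>E. \<forall>(c,d)\<in>E. (a = c \<longleftrightarrow> b = d))
      \<and> (\<forall>(a,b)\<in>E. \<not> (a < 0 \<and> b < 0))}"

definition crg :: "int set \<Rightarrow> int set \<Rightarrow> (int \<times> int) set \<Rightarrow> nat" where
  "crg S B E =
     card {((a,b),(c,d)). (a,b) \<in> E \<and> (c,d) \<in> E \<and> a < c \<and> d < b}
   + card {((a,b),c). (a,b) \<in> E \<and> c \<in> S - fst ` E \<and> c < a}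
   + card {((a,b),d). (a,b) \<in> E \<and> d \<in> B - snd ` E \<and> d < b}"

definition wt :: "int set \<Rightarrow> int set \<Rightarrow> (int \<times> int) set \<Rightarrow> int \<times> int \<Rightarrow> nat" where
  "wt S B E e = card {(c,d)\<in>E. fst e < c \<and> d < snd e}
     + card {c\<in>S - fst ` E. c < fst e} + card {d\<in>B - snd ` E. d < snd e}"

lemma crg_sum:
  assumes "finite S" "finite B" "E \<subseteq> S \<times> B"
  shows "crg S B E = (\<Sum>e\<in>E. wt S B E e)"
proof -
  have fE: "finite E" using assms finite_subset by blast
  have 1: "{((a,b),(c,d)). (a,b) \<in> E \<and> (c,d) \<in> E \<and> a < c \<and> d < b}
      = Sigma E (\<lambda>e. {(c,d)\<in>E. fst e < c \<and> d < snd e})" by auto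
  have 2: "{((a,b),c). (a,b) \<in> E \<and> c \<in> S - fst ` E \<and> c < a}
      = Sigma E (\<lambda>e. {c\<in>S - fst ` E. c < fst e})" by auto
  have 3: "{((a,b),d). (a,b) \<in> E \<and> d \<in> B - snd ` E \<and> d < b}
      = Sigma E (\<lambda>e. {d\<in>B - snd ` E. d < snd e})" by auto
  show ?thesis unfolding crg_def wt_def 1 2 3 sum.distrib
    using fE assms by (subst card_SigmaI, auto intro: finite_subset)+
qed

lemma matchg_fin: "finite S \<Longrightarrow> finite B \<Longrightarrow> finite (matchg S B)"
  by (rule finite_subset[of _ "Pow (S \<times> B)"]) (auto simp: matchg_def)

lemma matchg_sub: "E \<in> matchg S B \<Longrightarrow> E \<subseteq> S \<times> B"
  by (simp add: matchg_def)

lemma matchg_bij: "E \<in> matchg S B \<Longrightarrow> (a,b) \<in> E \<Longrightarrow> (c,d) \<in> E \<Longrightarrow> (a = c \<longleftrightarrow> b = d)"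
  unfolding matchg_def by blast

lemma matchg_empty: "{} \<in> matchg S B" by (simp add: matchg_def)

definition FF :: "real \<Rightarrow> int set \<Rightarrow> int set \<Rightarrow> nat \<Rightarrow> real" where
  "FF q S B t = (\<Sum>E\<in>{E\<in>matchg S B. card E = t}. q ^ crg S B E)"

lemma FF_0: assumes "finite S" "finite B" shows "FF q S B 0 = 1"
proof -
  have "{E\<in>matchg S B. card E = 0} = {{}}"
  proof -
    have fin: "E \<in> matchg S B \<Longrightarrow> finite E" for E
      using matchg_sub assms by (meson finite_SigmaI finite_subset)
    then show ?thesis using matchg_empty by (auto simp: card_0_eq)
  qed
  then show ?thesis using crg_sum[of S B "{}"] assms by (simp add: FF_def)
qed

lemma FF_empty: "FF q {} B (Suc t) = 0"
proof -
  have "matchg {} B = {{}}" by (auto simp: matchg_def)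
  then have e: "{E\<in>matchg {} B. card E = Suc t} = {}" by auto
  show ?thesis by (simp only: FF_def e sum.empty)
qed

lemma crg_iso:
  assumes fS: "finite S" and fB: "finite B" and x: "x \<in> S" "\<forall>s\<in>S. x \<le> s"
    and E: "E \<subseteq> (S - {x}) \<times> B"
  shows "crg S B E = crg (S - {x}) B E + card E"
proof -
  have E1: "E \<subseteq> S \<times> B" using E by auto
  have fE: "finite E" using E fS fB by (meson finite_Diff finite_SigmaI finite_subset)
  have "wt S B E e = Suc (wt (S - {x}) B E e)" if e: "e \<in> E" for e
  proof -
    have a: "fst e \<in> S" "fst e \<noteq> x" using e E by auto
    then have xa: "x < fst e" using x by force
    have xn: "x \<notin> fst ` E" using E by auto
    have "{c\<in>S - fst ` E. c < fst e} = insert x {c\<in>(S - {x}) - fst ` E. c < fst e}"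
      using xa xn x by auto
    moreover have "finite {c\<in>(S - {x}) - fst ` E. c < fst e}" using fS by auto
    ultimately have "card {c\<in>S - fst ` E. c < fst e} = Suc (card {c\<in>(S - {x}) - fst ` E. c < fst e})"
      by simp
    then show ?thesis unfolding wt_def by simp
  qed
  then have "(\<Sum>e\<in>E. wt S B E e) = (\<Sum>e\<in>E. wt (S - {x}) B E e + 1)"
    by (intro sum.cong) auto
  then have "(\<Sum>e\<in>E. wt S B E e) = (\<Sum>e\<in>E. wt (S - {x}) B E e) + card E"
    by (simp only: sum.distrib card_eq_sum)
  then show ?thesis using crg_sum[OF fS fB E1] crg_sum[of "S - {x}" B E] fS fB E by simp
qed

lemma crg_matched:
  assumes fS: "finite S" and fB: "finite B" and x: "x \<in> S" "\<forall>s\<in>S. x \<le> s"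
    and E: "E \<in> matchg S B" and xb: "(x,b) \<in> E"
  shows "crg S B E = crg (S - {x}) (B - {b}) (E - {(x,b)}) + card {d\<in>B. d < b}"
proof -
  define E' where "E' = E - {(x,b)}"
  have ESB: "E \<subseteq> S \<times> B" using E matchg_sub by blast
  have fE: "finite E" using ESB fS fB by (meson finite_SigmaI finite_subset)
  have bij: "\<And>a1 b1 a2 b2. (a1,b1) \<in> E \<Longrightarrow> (a2,b2) \<in> E \<Longrightarrow> (a1 = a2 \<longleftrightarrow> b1 = b2)"
    using matchg_bij[OF E] by blast
  have E'sub: "E' \<subseteq> (S - {x}) \<times> (B - {b})"
  proof
    fix e assume "e \<in> E'"
    then obtain a d where e: "e = (a,d)" "(a,d) \<in> E" "(a,d) \<noteq> (x,b)" unfolding E'_def by (cases e) auto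
    then have "a \<noteq> x" "d \<noteq> b" using bij[OF e(2) xb] by auto
    then show "e \<in> (S - {x}) \<times> (B - {b})" using e ESB by auto
  qed
  have fstE: "fst ` E = insert x (fst ` E')" unfolding E'_def using xb by force
  have sndE: "snd ` E = insert b (snd ` E')" unfolding E'_def using xb by force
  have xE': "x \<notin> fst ` E'" and bE': "b \<notin> snd ` E'" using E'sub by auto
  have w1: "wt S B E e = wt (S - {x}) (B - {b}) E' e" if e: "e \<in> E'" for e
  proof -
    have ex: "x \<le> fst e" using e E'sub x by auto
    have "{(c,d)\<in>E. fst e < c \<and> d < snd e} = {(c,d)\<in>E'. fst e < c \<and> d < snd e}"
      unfolding E'_def using ex by auto
    moreover have "S - fst ` E = (S - {x}) - fst ` E'" using fstE by auto
    moreover have "B - snd ` E = (B - {b}) - snd ` E'" using sndE by auto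
    ultimately show ?thesis unfolding wt_def by simp
  qed
  have w2: "wt S B E (x,b) = card {d\<in>B. d < b}"
  proof -
    have s1: "{(c,d)\<in>E. x < c \<and> d < b} = {e\<in>E. snd e < b}"
    proof (auto)
      fix c d assume cd: "(c,d) \<in> E" "d < b"
      then have "c \<noteq> x" using bij[OF cd(1) xb] by auto
      moreover have "c \<in> S" using cd ESB by auto
      ultimately show "x < c" using x by force
    qed
    have injs: "inj_on snd E"
      by (rule inj_onI) (metis bij prod.collapse)
    have "card {e\<in>E. snd e < b} = card (snd ` {e\<in>E. snd e < b})"
      by (rule card_image[symmetric]) (rule inj_on_subset[OF injs], auto)
    also have "snd ` {e\<in>E. snd e < b} = {d\<in>snd ` E. d < b}" by auto
    finally have c1: "card {(c,d)\<in>E. x < c \<and> d < b} = card {d\<in>snd ` E. d < b}" using s1 by simp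
    have c2: "{c\<in>S - fst ` E. c < x} = {}" using x by force
    have "{d\<in>B. d < b} = {d\<in>snd ` E. d < b} \<union> {d\<in>B - snd ` E. d < b}" using ESB by auto
    moreover have "finite {d\<in>snd ` E. d < b}" "finite {d\<in>B - snd ` E. d < b}" using fE fB by auto
    ultimately have "card {d\<in>B. d < b} = card {d\<in>snd ` E. d < b} + card {d\<in>B - snd ` E. d < b}"
      by (simp add: card_Un_disjoint[symmetric] Int_def)
    then show ?thesis unfolding wt_def using c1 by (simp only: c2 card.empty fst_conv snd_conv)
  qed
  have Eins: "E = insert (x,b) E'" unfolding E'_def using xb by auto
  have "(\<Sum>e\<in>E. wt S B E e) = wt S B E (x,b) + (\<Sum>e\<in>E'. wt S B E e)"
    using fE by (subst Eins, subst sum.insert) (auto simp: E'_def)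
  also have "(\<Sum>e\<in>E'. wt S B E e) = (\<Sum>e\<in>E'. wt (S - {x}) (B - {b}) E' e)"
    using w1 by simp
  finally have "(\<Sum>e\<in>E. wt S B E e) = card {d\<in>B. d < b} + (\<Sum>e\<in>E'. wt (S - {x}) (B - {b}) E' e)"
    using w2 by simp
  then show ?thesis
    using crg_sum[OF fS fB ESB] crg_sum[of "S - {x}" "B - {b}" E'] E'sub fS fB
    unfolding E'_def by simp
qed

lemma matchg_subset: "E \<in> matchg S B \<Longrightarrow> E' \<subseteq> E \<Longrightarrow> E' \<subseteq> S' \<times> B' \<Longrightarrow> E' \<in> matchg S' B'"
  unfolding matchg_def by blast

lemma matchg_remove:
  assumes E: "E \<in> matchg S B" and xb: "(x,b) \<in> E"
  shows "E - {(x,b)} \<in> matchg (S - {x}) (B - {b})"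
proof -
  have ESB: "E \<subseteq> S \<times> B" using E matchg_sub by blast
  have bij: "\<And>a1 b1 a2 b2. (a1,b1) \<in> E \<Longrightarrow> (a2,b2) \<in> E \<Longrightarrow> (a1 = a2 \<longleftrightarrow> b1 = b2)"
    using matchg_bij[OF E] by blast
  have "E - {(x,b)} \<subseteq> (S - {x}) \<times> (B - {b})"
  proof
    fix e assume "e \<in> E - {(x,b)}"
    then obtain a d where e: "e = (a,d)" "(a,d) \<in> E" "(a,d) \<noteq> (x,b)" by (cases e) auto
    then have "a \<noteq> x" "d \<noteq> b" using bij[OF e(2) xb] by auto
    then show "e \<in> (S - {x}) \<times> (B - {b})" using e ESB by auto
  qed
  then show ?thesis using matchg_subset[OF E] by blast
qed

lemma matchg_insert:
  assumes E: "E \<in> matchg (S - {x}) (B - {b})" and x: "x \<in> S" and b: "b \<in> B"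
    and ok: "\<not> (x < 0 \<and> b < 0)"
  shows "insert (x,b) E \<in> matchg S B"
  using E x b ok unfolding matchg_def by blast

lemma FF_rec:
  assumes fS: "finite S" and fB: "finite B" and x: "x \<in> S" "\<forall>s\<in>S. x \<le> s"
  shows "FF q S B (Suc t) = q ^ Suc t * FF q (S - {x}) B (Suc t)
     + (\<Sum>b\<in>{b\<in>B. \<not> (x < 0 \<and> b < 0)}. q ^ card {d\<in>B. d < b} * FF q (S - {x}) (B - {b}) t)"
proof -
  define A where "A = {E\<in>matchg S B. card E = Suc t}"
  define f where "f E = q ^ crg S B E" for E
  have fA: "finite A" unfolding A_def using matchg_fin[OF fS fB] by simp
  have finE: "finite E" if "E \<in> matchg S' B'" "finite S'" "finite B'" for E S' B'
    using matchg_sub[OF that(1)] that(2,3) by (meson finite_SigmaI finite_subset)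
  have split: "sum f A = sum f {E\<in>A. x \<notin> fst ` E} + sum f {E\<in>A. x \<in> fst ` E}"
    using fA by (simp add: sum.inter_filter sum.distrib[symmetric], intro sum.cong) auto
  have A1: "{E\<in>A. x \<notin> fst ` E} = {E\<in>matchg (S - {x}) B. card E = Suc t}"
  proof (rule set_eqI, rule iffI)
    fix E assume "E \<in> {E\<in>A. x \<notin> fst ` E}"
    then have E: "E \<in> matchg S B" "card E = Suc t" "x \<notin> fst ` E" unfolding A_def by auto
    have "E \<subseteq> (S - {x}) \<times> B" using matchg_sub[OF E(1)] E(3) by force
    then show "E \<in> {E\<in>matchg (S - {x}) B. card E = Suc t}"
      using matchg_subset[OF E(1)] E(2) by blast
  next
    fix E assume "E \<in> {E\<in>matchg (S - {x}) B. card E = Suc t}"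
    then have E: "E \<in> matchg (S - {x}) B" "card E = Suc t" by auto
    have "E \<subseteq> S \<times> B" using matchg_sub[OF E(1)] by auto
    then have "E \<in> matchg S B" using matchg_subset[OF E(1)] by blast
    moreover have "x \<notin> fst ` E" using matchg_sub[OF E(1)] by force
    ultimately show "E \<in> {E\<in>A. x \<notin> fst ` E}" unfolding A_def using E(2) by auto
  qed
  have P1: "sum f {E\<in>A. x \<notin> fst ` E} = q ^ Suc t * FF q (S - {x}) B (Suc t)"
    unfolding A1 FF_def sum_distrib_left
  proof (rule sum.cong)
    fix E assume "E \<in> {E\<in>matchg (S - {x}) B. card E = Suc t}"
    then have E: "E \<in> matchg (S - {x}) B" "card E = Suc t" by auto
    have "crg S B E = crg (S - {x}) B E + Suc t"
      using crg_iso[OF fS fB x matchg_sub[OF E(1)]] E(2) by simp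
    then show "f E = q ^ Suc t * q ^ crg (S - {x}) B E"
      unfolding f_def by (simp add: power_add mult.commute)
  qed simp
  have P2: "sum f {E\<in>A. x \<in> fst ` E} = (\<Sum>b\<in>B. sum f {E\<in>A. (x,b) \<in> E})"
  proof -
    define A2 where "A2 = {E\<in>A. x \<in> fst ` E}"
    have fA2: "finite A2" unfolding A2_def using fA by simp
    have "sum f A2 = (\<Sum>E\<in>A2. \<Sum>b\<in>B. if (x,b) \<in> E then f E else 0)"
    proof (rule sum.cong)
      fix E assume "E \<in> A2"
      then have E: "E \<in> matchg S B" "x \<in> fst ` E" unfolding A2_def A_def by auto
      then obtain b0 where b0: "(x,b0) \<in> E" by force
      have b0B: "b0 \<in> B" using b0 matchg_sub[OF E(1)] by auto
      have "(x,b) \<in> E \<longleftrightarrow> b = b0" for b using matchg_bij[OF E(1) _ b0] b0 by blast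
      then have "(\<Sum>b\<in>B. if (x,b) \<in> E then f E else 0) = (\<Sum>b\<in>B. if b = b0 then f E else 0)"
        by simp
      also have "\<dots> = f E" using fB b0B by simp
      finally show "f E = (\<Sum>b\<in>B. if (x,b) \<in> E then f E else 0)" by simp
    qed simp
    also have "\<dots> = (\<Sum>b\<in>B. \<Sum>E\<in>A2. if (x,b) \<in> E then f E else 0)"
      by (rule sum.swap)
    also have "\<dots> = (\<Sum>b\<in>B. sum f {E\<in>A2. (x,b) \<in> E})"
      using fA2 by (simp add: sum.inter_filter)
    also have "\<dots> = (\<Sum>b\<in>B. sum f {E\<in>A. (x,b) \<in> E})"
      unfolding A2_def by (intro sum.cong refl arg_cong[where f="sum f"]) force
    finally show ?thesis unfolding A2_def .
  qed
  have P3: "sum f {E\<in>A. (x,b) \<in> E}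
      = (if \<not> (x < 0 \<and> b < 0) then q ^ card {d\<in>B. d < b} * FF q (S - {x}) (B - {b}) t else 0)"
    if b: "b \<in> B" for b
  proof (cases "x < 0 \<and> b < 0")
    case True
    then have e: "{E\<in>A. (x,b) \<in> E} = {}" unfolding A_def matchg_def by blast
    show ?thesis using True by (simp only: e sum.empty) simp
  next
    case False
    have "sum f {E\<in>A. (x,b) \<in> E}
      = (\<Sum>E'\<in>{E\<in>matchg (S - {x}) (B - {b}). card E = t}. q ^ card {d\<in>B. d < b} * q ^ crg (S - {x}) (B - {b}) E')"
    proof (rule sum.reindex_bij_witness[where j="\<lambda>E. E - {(x,b)}" and i="insert (x,b)"])
      fix E assume "E \<in> {E\<in>A. (x,b) \<in> E}"
      then have E: "E \<in> matchg S B" "card E = Suc t" "(x,b) \<in> E" unfolding A_def by auto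
      show "insert (x,b) (E - {(x,b)}) = E" using E(3) by auto
      have "finite E" using finE[OF E(1) fS fB] .
      then show "E - {(x,b)} \<in> {E\<in>matchg (S - {x}) (B - {b}). card E = t}"
        using matchg_remove[OF E(1) E(3)] E(2,3) by simp
      show "q ^ card {d\<in>B. d < b} * q ^ crg (S - {x}) (B - {b}) (E - {(x,b)}) = f E"
        unfolding f_def crg_matched[OF fS fB x E(1) E(3)] by (simp add: power_add mult.commute)
    next
      fix E' assume "E' \<in> {E\<in>matchg (S - {x}) (B - {b}). card E = t}"
      then have E': "E' \<in> matchg (S - {x}) (B - {b})" "card E' = t" by auto
      have nx: "(x,b) \<notin> E'" using matchg_sub[OF E'(1)] by auto
      show "insert (x,b) E' - {(x,b)} = E'" using nx by auto
      have "finite E'" using finE[OF E'(1)] fS fB by simp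
      then show "insert (x,b) E' \<in> {E\<in>A. (x,b) \<in> E}"
        unfolding A_def using matchg_insert[OF E'(1) x(1) b False] nx E'(2) by simp
    qed
    then show ?thesis using False unfolding FF_def sum_distrib_left by simp
  qed
  have "FF q S B (Suc t) = sum f A" unfolding FF_def A_def f_def ..
  also have "\<dots> = q ^ Suc t * FF q (S - {x}) B (Suc t)
     + (\<Sum>b\<in>B. if \<not> (x < 0 \<and> b < 0) then q ^ card {d\<in>B. d < b} * FF q (S - {x}) (B - {b}) t else 0)"
    using split P1 P2 P3 by simp
  also have "(\<Sum>b\<in>B. if \<not> (x < 0 \<and> b < 0) then q ^ card {d\<in>B. d < b} * FF q (S - {x}) (B - {b}) t else 0)
     = (\<Sum>b\<in>{b\<in>B. \<not> (x < 0 \<and> b < 0)}. q ^ card {d\<in>B. d < b} * FF q (S - {x}) (B - {b}) t)"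
    using fB by (simp add: sum.inter_filter)
  finally show ?thesis .
qed

lemma rank_sum:
  fixes X :: "int set"
  assumes "finite X"
  shows "(\<Sum>x\<in>X. (q::real) ^ card {y\<in>X. y < x}) = (\<Sum>k<card X. q ^ k)"
  using assms
proof (induction X rule: finite_linorder_max_induct)
  case empty
  then show ?case by simp
next
  case (insert b A)
  have bA: "b \<notin> A" using insert(2) by auto
  have "(\<Sum>x\<in>insert b A. q ^ card {y\<in>insert b A. y < x})
      = q ^ card {y\<in>insert b A. y < b} + (\<Sum>x\<in>A. q ^ card {y\<in>insert b A. y < x})"
    using insert(1) bA by simp
  also have "{y\<in>insert b A. y < b} = A" using insert(2) by auto
  also have "(\<Sum>x\<in>A. q ^ card {y\<in>insert b A. y < x}) = (\<Sum>x\<in>A. q ^ card {y\<in>A. y < x})"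
  proof (rule sum.cong)
    fix x assume "x \<in> A"
    then have "{y\<in>insert b A. y < x} = {y\<in>A. y < x}" using insert(2) by auto
    then show "q ^ card {y\<in>insert b A. y < x} = q ^ card {y\<in>A. y < x}" by simp
  qed simp
  finally show ?case using insert(1,3) bA by simp
qed

lemma geo_qint: "q < 1 \<Longrightarrow> (\<Sum>k<n. q ^ k) = qint q n"
  by (simp add: sum_gp_strict qint_def)

definition negs :: "int set \<Rightarrow> int set" where "negs X = {x\<in>X. x < 0}"
definition nns :: "int set \<Rightarrow> int set" where "nns X = {x\<in>X. \<not> x < 0}"

lemma rank_nn_sum:
  fixes B :: "int set"
  assumes "finite B" "q < 1"
  shows "(\<Sum>b\<in>nns B. q ^ card {d\<in>B. d < b}) = q ^ card (negs B) * qint q (card (nns B))"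
proof -
  have "card {d\<in>B. d < b} = card (negs B) + card {d\<in>nns B. d < b}" if b: "b \<in> nns B" for b
  proof -
    have "{d\<in>B. d < b} = negs B \<union> {d\<in>nns B. d < b}" using b unfolding negs_def nns_def by auto
    moreover have "negs B \<inter> {d\<in>nns B. d < b} = {}" unfolding negs_def nns_def by auto
    moreover have "finite (negs B)" "finite {d\<in>nns B. d < b}" using assms unfolding negs_def nns_def by auto
    ultimately show ?thesis by (simp add: card_Un_disjoint)
  qed
  then have "(\<Sum>b\<in>nns B. q ^ card {d\<in>B. d < b}) = (\<Sum>b\<in>nns B. q ^ card (negs B) * q ^ card {d\<in>nns B. d < b})"
    by (simp add: power_add)
  also have "\<dots> = q ^ card (negs B) * (\<Sum>b\<in>nns B. q ^ card {d\<in>nns B. d < b})"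
    by (simp add: sum_distrib_left)
  also have "\<dots> = q ^ card (negs B) * qint q (card (nns B))"
    using rank_sum[of "nns B" q] assms geo_qint[of q] unfolding nns_def by simp
  finally show ?thesis .
qed

lemma rank_all_sum:
  fixes B :: "int set"
  assumes "finite B" "q < 1"
  shows "(\<Sum>b\<in>B. q ^ card {d\<in>B. d < b}) = qint q (card B)"
  using rank_sum[OF assms(1), of q] geo_qint[OF assms(2)] by simp

lemma FF_pos:
  assumes q0: "0 < q" and q1: "q < 1"
  shows "finite S \<Longrightarrow> finite B \<Longrightarrow> \<forall>s\<in>S. \<not> s < 0 \<Longrightarrow> card S = n
    \<Longrightarrow> FF q S B t = qbn q (card S) t * ffq q (card B) t"
proof (induction n arbitrary: S B t)
  case 0
  note P0 = this
  then have S: "S = {}" by simp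
  show ?case
  proof (cases t)
    case 0 then show ?thesis using FF_0[OF P0(1,2)] by (simp add: qbn_0[OF q0 q1] ffq_0[OF q0 q1])
  next
    case (Suc t') then show ?thesis using S by (simp add: FF_empty qbn_0_Suc[OF q0 q1])
  qed
next
  case (Suc n)
  then have ne: "S \<noteq> {}" by auto
  define x where "x = Min S"
  have x: "x \<in> S" "\<forall>s\<in>S. x \<le> s" using Suc.prems(1) ne unfolding x_def by auto
  have x0: "\<not> x < 0" using x Suc.prems(3) by auto
  have cS: "card (S - {x}) = n" using Suc.prems(4) x(1) Suc.prems(1) by simp
  show ?case
  proof (cases t)
    case 0 then show ?thesis using FF_0[OF Suc.prems(1,2)] by (simp add: qbn_0[OF q0 q1] ffq_0[OF q0 q1])
  next
    case (Suc t')
    have IH1: "FF q (S - {x}) B (Suc t') = qbn q n (Suc t') * ffq q (card B) (Suc t')"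
      using Suc.IH[of "S - {x}" B "Suc t'"] Suc.prems cS by simp
    have IH2: "FF q (S - {x}) (B - {b}) t' = qbn q n t' * ffq q (card B - 1) t'" if "b \<in> B" for b
      using Suc.IH[of "S - {x}" "B - {b}" t'] Suc.prems cS that by simp
    have allow: "{b\<in>B. \<not> (x < 0 \<and> b < 0)} = B" using x0 by auto
    have "FF q S B (Suc t') = q ^ Suc t' * (qbn q n (Suc t') * ffq q (card B) (Suc t'))
       + (\<Sum>b\<in>B. q ^ card {d\<in>B. d < b} * (qbn q n t' * ffq q (card B - 1) t'))"
      unfolding FF_rec[OF Suc.prems(1,2) x, of q t'] allow IH1
      by (simp add: IH2)
    also have "\<dots> = q ^ Suc t' * (qbn q n (Suc t') * ffq q (card B) (Suc t'))
       + qint q (card B) * (qbn q n t' * ffq q (card B - 1) t')"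
      by (simp add: sum_distrib_right[symmetric] rank_all_sum[OF Suc.prems(2) q1])
    also have "\<dots> = qbn q (Suc n) (Suc t') * ffq q (card B) (Suc t')"
    proof (cases "card B")
      case 0 then show ?thesis by (simp add: ffq_0_Suc[OF q0 q1])
    next
      case (Suc m)
      show ?thesis unfolding Suc by (simp add: ffq_Suc[OF q0 q1] qbn_pascal[OF q0 q1] algebra_simps)
    qed
    finally show ?thesis using Suc.prems(4) \<open>t = Suc t'\<close> by simp
  qed
qed

definition Phi :: "real \<Rightarrow> nat \<Rightarrow> nat \<Rightarrow> nat \<Rightarrow> nat \<Rightarrow> nat \<Rightarrow> real" where
  "Phi q s1 s2 b1 b2 t = (\<Sum>i=0..t. q ^ ((s1 - i) * (t - i) + b1 * i) * qbn q s1 i * ffq q b2 i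
      * qbn q s2 (t - i) * ffq q (b1 + b2 - i) (t - i))"

context
  fixes q :: real
  assumes q0: "0 < q" and q1: "q < 1"
begin

lemma phi_term:
  assumes it: "i \<le> t"
  shows "q ^ ((s - i) * (t - i) + b1 * Suc i) * qbn q (Suc s) (Suc i) * ffq q b2 (Suc i)
          * qbn q s2 (t - i) * ffq q (b1 + b2 - Suc i) (t - i)
       = q ^ Suc t * (q ^ ((s - Suc i) * (t - i) + b1 * Suc i) * qbn q s (Suc i) * ffq q b2 (Suc i)
          * qbn q s2 (t - i) * ffq q (b1 + b2 - Suc i) (t - i))
        + q ^ b1 * qint q b2 * (q ^ ((s - i) * (t - i) + b1 * i) * qbn q s i * ffq q (b2 - 1) i
          * qbn q s2 (t - i) * ffq q (b1 + (b2 - 1) - i) (t - i))"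
proof (cases b2)
  case 0
  then show ?thesis by (simp add: ffq_0_Suc[OF q0 q1])
next
  case (Suc c)
  define Y where "Y = qbn q s2 (t - i) * ffq q (b1 + c - i) (t - i)"
  have bb: "b1 + b2 - Suc i = b1 + c - i" "b1 + (b2 - 1) - i = b1 + c - i" using Suc by auto
  have e1: "q ^ ((s - i) * (t - i) + b1 * Suc i) = q ^ b1 * q ^ ((s - i) * (t - i) + b1 * i)"
    by (simp add: power_add[symmetric] algebra_simps)
  have e2: "q ^ ((s - i) * (t - i) + b1 * Suc i) * q ^ Suc i * qbn q s (Suc i)
       = q ^ Suc t * q ^ ((s - Suc i) * (t - i) + b1 * Suc i) * qbn q s (Suc i)"
  proof (cases "Suc i \<le> s")
    case True
    then obtain a where a: "s = Suc i + a" by (metis le_add_diff_inverse)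
    obtain d where d: "t = i + d" using it by (metis le_add_diff_inverse)
    have "(s - i) * (t - i) + b1 * Suc i + Suc i = Suc t + ((s - Suc i) * (t - i) + b1 * Suc i)"
      using a d by (simp add: algebra_simps)
    then have "q ^ ((s - i) * (t - i) + b1 * Suc i) * q ^ Suc i = q ^ Suc t * q ^ ((s - Suc i) * (t - i) + b1 * Suc i)"
      by (metis power_add)
    then show ?thesis by simp
  qed simp
  have LHS: "q ^ ((s - i) * (t - i) + b1 * Suc i) * qbn q (Suc s) (Suc i) * ffq q b2 (Suc i)
          * qbn q s2 (t - i) * ffq q (b1 + b2 - Suc i) (t - i)
     = (q ^ ((s - i) * (t - i) + b1 * Suc i) * qbn q s i
        + q ^ ((s - i) * (t - i) + b1 * Suc i) * q ^ Suc i * qbn q s (Suc i)) * qint q (Suc c) * ffq q c i * Y"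
    unfolding Y_def bb Suc by (simp add: qbn_pascal[OF q0 q1] ffq_Suc[OF q0 q1] algebra_simps)
  show ?thesis unfolding LHS e2 unfolding e1 Y_def bb Suc by (simp add: ffq_Suc[OF q0 q1] algebra_simps)
qed

lemma Phi_rec:
  "Phi q (Suc s) s2 b1 b2 (Suc t) = q ^ Suc t * Phi q s s2 b1 b2 (Suc t)
     + q ^ b1 * qint q b2 * Phi q s s2 b1 (b2 - 1) t"
proof -
  have L: "Phi q (Suc s) s2 b1 b2 (Suc t)
    = q ^ (Suc s * Suc t) * qbn q s2 (Suc t) * ffq q (b1 + b2) (Suc t)
      + (\<Sum>i=0..t. q ^ ((s - i) * (t - i) + b1 * Suc i) * qbn q (Suc s) (Suc i) * ffq q b2 (Suc i)
          * qbn q s2 (t - i) * ffq q (b1 + b2 - Suc i) (t - i))"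
    unfolding Phi_def
    by (simp add: sum.atLeast0_atMost_Suc_shift qbn_0[OF q0 q1] ffq_0[OF q0 q1] del: sum.cl_ivl_Suc)
  have M: "Phi q s s2 b1 b2 (Suc t)
    = q ^ (s * Suc t) * qbn q s2 (Suc t) * ffq q (b1 + b2) (Suc t)
      + (\<Sum>i=0..t. q ^ ((s - Suc i) * (t - i) + b1 * Suc i) * qbn q s (Suc i) * ffq q b2 (Suc i)
          * qbn q s2 (t - i) * ffq q (b1 + b2 - Suc i) (t - i))"
    unfolding Phi_def
    by (simp add: sum.atLeast0_atMost_Suc_shift qbn_0[OF q0 q1] ffq_0[OF q0 q1] del: sum.cl_ivl_Suc)
  have R: "Phi q s s2 b1 (b2 - 1) t = (\<Sum>i=0..t. q ^ ((s - i) * (t - i) + b1 * i) * qbn q s i * ffq q (b2 - 1) i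
          * qbn q s2 (t - i) * ffq q (b1 + (b2 - 1) - i) (t - i))"
    unfolding Phi_def ..
  have "Suc s * Suc t = Suc t + s * Suc t" by simp
  then have P: "q ^ (Suc s * Suc t) = q ^ Suc t * q ^ (s * Suc t)" by (metis power_add)
  have S: "(\<Sum>i=0..t. q ^ ((s - i) * (t - i) + b1 * Suc i) * qbn q (Suc s) (Suc i) * ffq q b2 (Suc i)
          * qbn q s2 (t - i) * ffq q (b1 + b2 - Suc i) (t - i))
     = q ^ Suc t * (\<Sum>i=0..t. q ^ ((s - Suc i) * (t - i) + b1 * Suc i) * qbn q s (Suc i) * ffq q b2 (Suc i)
          * qbn q s2 (t - i) * ffq q (b1 + b2 - Suc i) (t - i))
       + q ^ b1 * qint q b2 * (\<Sum>i=0..t. q ^ ((s - i) * (t - i) + b1 * i) * qbn q s i * ffq q (b2 - 1) i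
          * qbn q s2 (t - i) * ffq q (b1 + (b2 - 1) - i) (t - i))"
    unfolding sum_distrib_left sum.distrib[symmetric]
    by (intro sum.cong refl phi_term) simp
  show ?thesis unfolding L M R P S
    by (simp add: algebra_simps)
qed

end

lemma card_split: "finite B \<Longrightarrow> card B = card (negs B) + card (nns B)"
proof -
  assume f: "finite B"
  have "B = negs B \<union> nns B" "negs B \<inter> nns B = {}" unfolding negs_def nns_def by auto
  moreover have "finite (negs B)" "finite (nns B)" using f unfolding negs_def nns_def by auto
  ultimately show ?thesis by (metis card_Un_disjoint)
qed

lemma Phi_0:
  assumes q0: "0 < q" and q1: "q < 1"
  shows "Phi q 0 s2 b1 b2 t = qbn q s2 t * ffq q (b1 + b2) t"
proof (cases t)
  case 0 then show ?thesis by (simp add: Phi_def qbn_0[OF q0 q1] ffq_0[OF q0 q1])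
next
  case (Suc t') then show ?thesis
    by (simp add: Phi_def sum.atLeast0_atMost_Suc_shift qbn_0[OF q0 q1] ffq_0[OF q0 q1]
        qbn_0_Suc[OF q0 q1] del: sum.cl_ivl_Suc)
qed

lemma Phi_t0:
  assumes q0: "0 < q" and q1: "q < 1"
  shows "Phi q s1 s2 b1 b2 0 = 1"
  by (simp add: Phi_def qbn_0[OF q0 q1] ffq_0[OF q0 q1])

lemma FF_gen:
  assumes q0: "0 < q" and q1: "q < 1"
  shows "finite S \<Longrightarrow> finite B \<Longrightarrow> card (negs S) = n
    \<Longrightarrow> FF q S B t = Phi q n (card (nns S)) (card (negs B)) (card (nns B)) t"
proof (induction n arbitrary: S B t)
  case 0
  note P0 = this
  have fn: "finite (negs S)" using P0(1) unfolding negs_def by auto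
  then have "negs S = {}" using P0(3) by simp
  then have pos: "\<forall>s\<in>S. \<not> s < 0" unfolding negs_def by auto
  then have "nns S = S" unfolding nns_def by auto
  then show ?case
    using FF_pos[OF q0 q1 P0(1,2) pos refl, of t] Phi_0[OF q0 q1] card_split[OF P0(2)] by simp
next
  case (Suc n)
  have fn: "finite (negs S)" using Suc.prems(1) unfolding negs_def by auto
  then have "negs S \<noteq> {}" using Suc.prems(3) by auto
  then obtain y where y: "y \<in> S" "y < 0" unfolding negs_def by auto
  define x where "x = Min S"
  have ne: "S \<noteq> {}" using y by auto
  have x: "x \<in> S" "\<forall>s\<in>S. x \<le> s" using Suc.prems(1) ne unfolding x_def by auto
  have x0: "x < 0" using x(2) y by force
  have negsx: "negs (S - {x}) = negs S - {x}" unfolding negs_def by auto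
  have cn: "card (negs (S - {x})) = n" unfolding negsx using Suc.prems(3) x(1) x0 fn
    by (simp add: negs_def)
  have nnx: "nns (S - {x}) = nns S" unfolding nns_def using x0 by auto
  show ?case
  proof (cases t)
    case 0 then show ?thesis using FF_0[OF Suc.prems(1,2)] Phi_t0[OF q0 q1] by simp
  next
    case (Suc t')
    have allow: "{b\<in>B. \<not> (x < 0 \<and> b < 0)} = nns B" using x0 unfolding nns_def by auto
    have IH1: "FF q (S - {x}) B (Suc t') = Phi q n (card (nns S)) (card (negs B)) (card (nns B)) (Suc t')"
      using Suc.IH[of "S - {x}" B "Suc t'"] Suc.prems cn nnx by simp
    have IH2: "FF q (S - {x}) (B - {b}) t' = Phi q n (card (nns S)) (card (negs B)) (card (nns B) - 1) t'"
      if b: "b \<in> nns B" for b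
    proof -
      have "negs (B - {b}) = negs B" using b unfolding negs_def nns_def by auto
      moreover have "nns (B - {b}) = nns B - {b}" unfolding nns_def by auto
      moreover have "finite (nns B)" using Suc.prems(2) unfolding nns_def by auto
      ultimately show ?thesis using Suc.IH[of "S - {x}" "B - {b}" t'] Suc.prems cn nnx b by simp
    qed
    have "FF q S B (Suc t') = q ^ Suc t' * Phi q n (card (nns S)) (card (negs B)) (card (nns B)) (Suc t')
       + (\<Sum>b\<in>nns B. q ^ card {d\<in>B. d < b} * Phi q n (card (nns S)) (card (negs B)) (card (nns B) - 1) t')"
      unfolding FF_rec[OF Suc.prems(1,2) x, of q t'] allow IH1
      by (simp add: IH2)
    also have "\<dots> = q ^ Suc t' * Phi q n (card (nns S)) (card (negs B)) (card (nns B)) (Suc t')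
       + q ^ card (negs B) * qint q (card (nns B)) * Phi q n (card (nns S)) (card (negs B)) (card (nns B) - 1) t'"
      by (simp add: sum_distrib_right[symmetric] rank_nn_sum[OF Suc.prems(2) q1])
    also have "\<dots> = Phi q (Suc n) (card (nns S)) (card (negs B)) (card (nns B)) (Suc t')"
      by (rule Phi_rec[OF q0 q1, symmetric])
    finally show ?thesis using \<open>t = Suc t'\<close> by simp
  qed
qed

lemma qbinom_nat: "qbinom q (int n) (int m) = qbn q n m"
  by (simp add: qbinom_def qbn_def nat_diff_distrib)

context
  fixes q :: real
  assumes q0: "0 < q" and q1: "q < 1"
begin

lemma ff_split: "qfact q (i + a) / qfact q a * qbn q p (i + a) = ffq q p i * qbn q (p - i) a"
proof (cases "i + a \<le> p")
  case True
  have p: "qfact q m > 0" for m using qfact_pos[OF q0 q1] .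
  have e: "p - i - a = p - (i + a)" by simp
  have "a \<le> p - i" using True by simp
  show ?thesis using True p[of a] p[of "p - i"] p[of "p - (i+a)"] p[of i] p[of "i+a"] \<open>a \<le> p - i\<close>
    unfolding ffq_def qbn_def by (simp add: e field_simps)
next
  case False
  then show ?thesis
  proof (cases "i \<le> p")
    case True
    then have "p - i < a" using False by simp
    then show ?thesis using False by (simp add: qbn_def)
  next
    case False
    then show ?thesis by (simp add: ffq_def qbn_def)
  qed
qed

end

definition Gt :: "real \<Rightarrow> nat \<Rightarrow> nat \<Rightarrow> nat \<Rightarrow> nat \<Rightarrow> nat \<Rightarrow> nat \<Rightarrow> real" where
  "Gt q \<alpha> p j t l i =
       q powi (int i * (int l - int i) + (int t - int i) * (int j - int i + int \<alpha>)
               + (int j - int l + int i) * (int t - int l + int i))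
       * (qfact q (t - l + i) * qfact q (t - i) / qfact q (t - l))
       * qbinom q (int p) (int t - int i) * qbinom q (int p) (int t - int l + int i)
       * qbinom q (int \<alpha> + int j) (int i) * qbinom q (int j) (int l - int i)"

context
  fixes q :: real
  assumes q0: "0 < q" and q1: "q < 1"
begin

lemma Gt_k:
  assumes ik: "i + k \<le> t" and ia: "i \<le> \<alpha> + j"
  shows "Gt q \<alpha> p j t (i + k) i
    = q ^ ((\<alpha> + j - i) * (t - i) + j * i) * qbn q (\<alpha> + j) i * qbn q p (t - i) * qfact q (t - i)
      * ffq q p i * (q ^ ((j - k) * (t - i - k)) * qbn q j k * qbn q (p - i) (t - i - k))"
proof (cases "k \<le> j")
  case False
  have "qbinom q (int j) (int (i + k) - int i) = 0"
    using False by (simp add: qbinom_def)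
  then show ?thesis using False unfolding Gt_def by simp
next
  case True
  define a where "a = t - i - k"
  have t: "t = i + k + a" using ik unfolding a_def by simp
  obtain c where j: "j = k + c" using True by (metis le_add_diff_inverse)
  obtain d where al: "\<alpha> + j = i + d" using ia by (metis le_add_diff_inverse)
  have E: "int i * (int (i + k) - int i) + (int t - int i) * (int j - int i + int \<alpha>)
               + (int j - int (i + k) + int i) * (int t - int (i + k) + int i)
         = int ((\<alpha> + j - i) * (t - i) + j * i + (j - k) * (t - i - k))"
  proof -
    have h: "int \<alpha> = int d + int i - int c - int k" using al j by simp
    have h2: "\<alpha> + (c + k) - i = d" using al j by simp
    show ?thesis unfolding t j using h h2 by (simp add: algebra_simps)
  qed
  have Q: "q powi (int i * (int (i + k) - int i) + (int t - int i) * (int j - int i + int \<alpha>)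
               + (int j - int (i + k) + int i) * (int t - int (i + k) + int i))
     = q ^ ((\<alpha> + j - i) * (t - i) + j * i) * q ^ ((j - k) * (t - i - k))"
    unfolding E power_int_of_nat power_add ..
  have B1: "qbinom q (int p) (int t - int i) = qbn q p (t - i)"
    using qbinom_nat[of q p "t - i"] ik by (simp add: of_nat_diff)
  have B2: "qbinom q (int p) (int t - int (i + k) + int i) = qbn q p (i + a)"
    using qbinom_nat[of q p "i + a"] unfolding t by (simp add: add.commute)
  have B3: "qbinom q (int \<alpha> + int j) (int i) = qbn q (\<alpha> + j) i"
    using qbinom_nat[of q "\<alpha> + j" i] by simp
  have B4: "qbinom q (int j) (int (i + k) - int i) = qbn q j k"
    using qbinom_nat[of q j k] by simp
  have F1: "t - (i + k) + i = i + a" "t - (i + k) = a" "t - i - k = a" using t by auto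
  have FS: "qfact q (i + a) / qfact q a * qbn q p (i + a) = ffq q p i * qbn q (p - i) a"
    using ff_split[OF q0 q1] .
  have "qfact q (i + a) * qfact q (t - i) / qfact q a * qbn q p (i + a)
      = qfact q (t - i) * (qfact q (i + a) / qfact q a * qbn q p (i + a))" by simp
  also have "\<dots> = qfact q (t - i) * (ffq q p i * qbn q (p - i) a)" unfolding FS ..
  finally have FF2: "qfact q (i + a) * qfact q (t - i) / qfact q a * qbn q p (i + a)
      = qfact q (t - i) * (ffq q p i * qbn q (p - i) a)" .
  have "Gt q \<alpha> p j t (i + k) i
     = q ^ ((\<alpha> + j - i) * (t - i) + j * i) * q ^ ((j - k) * (t - i - k))
       * (qfact q (i + a) * qfact q (t - i) / qfact q a * qbn q p (i + a))
       * qbn q p (t - i) * qbn q (\<alpha> + j) i * qbn q j k"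
    unfolding Gt_def Q B1 B2 B3 B4 F1 by (simp add: mult_ac add.commute[of a i])
  also have "\<dots> = q ^ ((\<alpha> + j - i) * (t - i) + j * i) * qbn q (\<alpha> + j) i * qbn q p (t - i) * qfact q (t - i)
      * ffq q p i * (q ^ ((j - k) * (t - i - k)) * qbn q j k * qbn q (p - i) (t - i - k))"
    unfolding FF2 F1 by (simp add: mult_ac)
  finally show ?thesis .
qed

end

lemma triangle:
  fixes h :: "nat \<Rightarrow> nat \<Rightarrow> real"
  shows "(\<Sum>i=0..t. \<Sum>k=0..t - i. h (i + k) i) = (\<Sum>l=0..t. \<Sum>i=0..l. h l i)"
proof -
  have S: "{(i,k). i + k \<le> t} = Sigma {..t} (\<lambda>i. {..t - i})" by auto
  have "(\<Sum>i=0..t. \<Sum>k=0..t - i. h (i + k) i) = (\<Sum>i\<in>{..t}. \<Sum>k\<in>{..t - i}. h (i + k) i)"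
    by (simp add: atLeast0AtMost)
  also have "\<dots> = (\<Sum>(i,k)\<in>{(i,k). i + k \<le> t}. h (i + k) i)"
    unfolding S by (rule sum.Sigma) auto
  also have "\<dots> = (\<Sum>l\<le>t. \<Sum>i\<le>l. h (i + (l - i)) i)"
    by (rule sum.triangle_reindex_eq)
  also have "\<dots> = (\<Sum>l=0..t. \<Sum>i=0..l. h l i)"
    by (simp add: atLeast0AtMost)
  finally show ?thesis .
qed

context
  fixes q :: real
  assumes q0: "0 < q" and q1: "q < 1"
begin

lemma Phi_i:
  assumes it: "i \<le> t"
  shows "q ^ ((\<alpha> + j - i) * (t - i) + j * i) * qbn q (\<alpha> + j) i * ffq q p i * qbn q p (t - i)
          * ffq q (j + p - i) (t - i)
       = (\<Sum>k=0..t - i. Gt q \<alpha> p j t (i + k) i)"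
proof (cases "i \<le> \<alpha> + j")
  case False
  then have "qbinom q (int \<alpha> + int j) (int i) = 0" by (simp add: qbinom_def)
  then show ?thesis using False unfolding Gt_def by simp
next
  case ia: True
  show ?thesis
  proof (cases "i \<le> p")
    case False
    then have "ffq q p i = 0" by (simp add: ffq_def)
    then show ?thesis using Gt_k[OF q0 q1 _ ia] it by simp
  next
    case True
    have jp: "j + p - i = j + (p - i)" using True by simp
    have "q ^ ((\<alpha> + j - i) * (t - i) + j * i) * qbn q (\<alpha> + j) i * ffq q p i * qbn q p (t - i)
          * ffq q (j + p - i) (t - i)
        = q ^ ((\<alpha> + j - i) * (t - i) + j * i) * qbn q (\<alpha> + j) i * qbn q p (t - i) * qfact q (t - i)
          * ffq q p i * qbn q (j + (p - i)) (t - i)"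
      unfolding jp ffq_def[of q "j + (p - i)"] by (simp add: mult_ac)
    also have "\<dots> = (\<Sum>k=0..t - i. q ^ ((\<alpha> + j - i) * (t - i) + j * i) * qbn q (\<alpha> + j) i * qbn q p (t - i) * qfact q (t - i)
          * ffq q p i * (q ^ ((j - k) * (t - i - k)) * qbn q j k * qbn q (p - i) (t - i - k)))"
      unfolding qvand[OF q0 q1] sum_distrib_left ..
    also have "\<dots> = (\<Sum>k=0..t - i. Gt q \<alpha> p j t (i + k) i)"
    proof (rule sum.cong)
      fix k assume "k \<in> {0..t - i}"
      then have "i + k \<le> t" using it by simp
      from Gt_k[OF q0 q1 this ia, of p] show "q ^ ((\<alpha> + j - i) * (t - i) + j * i) * qbn q (\<alpha> + j) i * qbn q p (t - i) * qfact q (t - i)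
          * ffq q p i * (q ^ ((j - k) * (t - i - k)) * qbn q j k * qbn q (p - i) (t - i - k))
          = Gt q \<alpha> p j t (i + k) i" by simp
    qed simp
    finally show ?thesis .
  qed
qed

end

theorem mainTheorem12:
  fixes q :: real and \<alpha> p j t :: nat
  assumes "0 < q" "q < 1" "t \<le> p"
  shows "(\<Sum>M\<in>matchings_l \<alpha> p j t. q ^ cr \<alpha> p j M) =
    (\<Sum>l = 0..t. \<Sum>i = 0..l.
       q powi (int i * (int l - int i) + (int t - int i) * (int j - int i + int \<alpha>)
               + (int j - int l + int i) * (int t - int l + int i))
       * (qfact q (t - l + i) * qfact q (t - i) / qfact q (t - l))
       * qbinom q (int p) (int t - int i) * qbinom q (int p) (int t - int l + int i)
       * qbinom q (int \<alpha> + int j) (int i) * qbinom q (int j) (int l - int i))"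
proof -
  note q0 = assms(1) and q1 = assms(2)
  define S where "S = top_row \<alpha> p j"
  define B where "B = bot_row p j"
  have fS: "finite S" and fB: "finite B" unfolding S_def B_def top_row_def bot_row_def by auto
  have "(\<Sum>M\<in>matchings_l \<alpha> p j t. q ^ cr \<alpha> p j M) = FF q S B t"
    unfolding FF_def S_def B_def matchings_l_def matchings_def matchg_def cr_def crg_def ..
  also have "negs S = {-(int \<alpha> + int j)..-1}" unfolding S_def top_row_def negs_def by auto
  then have "card (negs S) = \<alpha> + j" by simp
  then have "FF q S B t = Phi q (\<alpha> + j) (card (nns S)) (card (negs B)) (card (nns B)) t"
    using FF_gen[OF q0 q1 fS fB] by simp
  also have "nns S = {1..int p}" unfolding S_def top_row_def nns_def by auto
  also have "negs B = {-(int j)..-1}" unfolding B_def bot_row_def negs_def by auto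
  also have "nns B = {1..int p}" unfolding B_def bot_row_def nns_def by auto
  finally have "(\<Sum>M\<in>matchings_l \<alpha> p j t. q ^ cr \<alpha> p j M) = Phi q (\<alpha> + j) p j p t" by simp
  also have "\<dots> = (\<Sum>i=0..t. \<Sum>k=0..t - i. Gt q \<alpha> p j t (i + k) i)"
    unfolding Phi_def by (rule sum.cong) (simp_all add: Phi_i[OF q0 q1])
  also have "\<dots> = (\<Sum>l=0..t. \<Sum>i=0..l. Gt q \<alpha> p j t l i)"
    by (rule triangle)
  finally show ?thesis unfolding Gt_def .
qed

end
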